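(* Under the assumptions and notation of Theorem 3.1, fix $\varphi\in D$ and let $\Psi_t(s):=\big\|[F(s/m(t))]^{m(t)}\varphi-T_s\varphi\big\|_X$. Then for each $\varepsilon>0$ there exist $t_\varepsilon>0$ and $s_\varepsilon>0$ such that $\Psi_t(s)/s<\varepsilon$ for all $t\in(0,t_\varepsilon]$ and all $s\in(0,s_\varepsilon]$.
   Context: $X$ is a Banach space; $(T_t)_{t\ge0}$ a strongly continuous contraction semigroup on $X$ with generator $(L,\mathrm{Dom}(L))$; $(F(t))_{t\ge0}$ a strongly continuous family of contractions on $X$ with $F(0)=\mathrm{Id}$, Chernoff equivalent to $(T_t)$, i.e. there is a core $D\subset\mathrm{Dom}(L)$ for $L$ with $\lim_{t\to0}\|t^{-1}(F(t)\varphi-\varphi)-L\varphi\|_X=0$ for $\varphi\in D$ (and consequently $[F(\tau/n)]^n\psi\to T_\tau\psi$ uniformly for $\tau$ in compact intervals, for every $\psi\in X$); $m:(0,\infty)\to\mathbb N_0$ monotone with $m(t)\to\infty$ as $t\to0$; $B^0:=\mathrm{Id}$. *)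

theory Defs
  imports "HOL-Analysis.Analysis"
begin

definition sc_contraction_semigroup :: "(real \<Rightarrow> 'a::banach \<Rightarrow>\<^sub>L 'a) \<Rightarrow> bool" where
  "sc_contraction_semigroup T \<longleftrightarrow>
     T 0 = id_blinfun \<and>
     (\<forall>s\<ge>0. \<forall>t\<ge>0. T (s + t) = T s o\<^sub>L T t) \<and>
     (\<forall>t\<ge>0. norm (T t) \<le> 1) \<and>
     (\<forall>x. continuous_on {0..} (\<lambda>t. T t x))"

definition gen_domain :: "(real \<Rightarrow> 'a::banach \<Rightarrow>\<^sub>L 'a) \<Rightarrow> 'a set" where
  "gen_domain T = {x. \<exists>y. ((\<lambda>t. (1 / t) *\<^sub>R (T t x - x)) \<longlongrightarrow> y) (at_right 0)}"

definition is_generator ::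
  "(real \<Rightarrow> 'a::banach \<Rightarrow>\<^sub>L 'a) \<Rightarrow> ('a \<Rightarrow> 'a) \<Rightarrow> 'a set \<Rightarrow> bool" where
  "is_generator T L Dom \<longleftrightarrow> Dom = gen_domain T \<and>
     (\<forall>x\<in>Dom. ((\<lambda>t. (1 / t) *\<^sub>R (T t x - x)) \<longlongrightarrow> L x) (at_right 0))"

definition is_core :: "('a::banach \<Rightarrow> 'a) \<Rightarrow> 'a set \<Rightarrow> 'a set \<Rightarrow> bool" where
  "is_core L Dom D \<longleftrightarrow> D \<subseteq> Dom \<and>
     (\<forall>x\<in>Dom. \<forall>e>0. \<exists>d\<in>D. norm (d - x) + norm (L d - L x) < e)"

definition sc_contraction_family :: "(real \<Rightarrow> 'a::banach \<Rightarrow>\<^sub>L 'a) \<Rightarrow> bool" where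
  "sc_contraction_family F \<longleftrightarrow>
     F 0 = id_blinfun \<and>
     (\<forall>t\<ge>0. norm (F t) \<le> 1) \<and>
     (\<forall>x. continuous_on {0..} (\<lambda>t. F t x))"

definition chernoff_equivalent_on ::
  "(real \<Rightarrow> 'a::banach \<Rightarrow>\<^sub>L 'a) \<Rightarrow> ('a \<Rightarrow> 'a) \<Rightarrow> 'a set \<Rightarrow> bool" where
  "chernoff_equivalent_on F L D \<longleftrightarrow>
     (\<forall>\<phi>\<in>D. ((\<lambda>t. norm ((1 / t) *\<^sub>R (F t \<phi> - \<phi>) - L \<phi>)) \<longlongrightarrow> 0) (at_right 0))"

definition op_pow :: "('a::real_normed_vector \<Rightarrow>\<^sub>L 'a) \<Rightarrow> nat \<Rightarrow> 'a \<Rightarrow> 'a" where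
  "op_pow B n = (blinfun_apply B ^^ n)"

end

theory Submission
  imports Defs
begin

lemma op_pow_0[simp]: "op_pow A 0 x = x" by (simp add: op_pow_def)
lemma op_pow_Suc: "op_pow A (Suc k) x = blinfun_apply A (op_pow A k x)" by (simp add: op_pow_def)
lemma op_pow_Suc_right: "op_pow A (Suc k) x = op_pow A k (blinfun_apply A x)"
  by (simp add: op_pow_def funpow_Suc_right del: funpow.simps)
lemma op_pow_add: "op_pow A k (x + y) = op_pow A k x + op_pow A k y"
  by (induct k) (simp_all add: op_pow_Suc blinfun.add_right)
lemma op_pow_diff: "op_pow A k (x - y) = op_pow A k x - op_pow A k y"
  by (induct k) (simp_all add: op_pow_Suc blinfun.diff_right)
lemma op_pow_scaleR: "op_pow A k (c *\<^sub>R x) = c *\<^sub>R op_pow A k x"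
  by (induct k) (simp_all add: op_pow_Suc blinfun.scaleR_right)
lemma op_pow_contr:
  fixes A :: "'a::real_normed_vector \<Rightarrow>\<^sub>L 'a"
  assumes "norm A \<le> 1" shows "norm (op_pow A k x) \<le> norm x"
proof (induct k)
  case (Suc k)
  have "norm (blinfun_apply A (op_pow A k x)) \<le> norm A * norm (op_pow A k x)" by (rule norm_blinfun)
  also have "\<dots> \<le> 1 * norm (op_pow A k x)" by (rule mult_right_mono[OF assms]) simp
  finally show ?case using Suc by (simp add: op_pow_Suc)
qed simp
lemma op_pow_tele: "op_pow A n x - x = (\<Sum>k<n. op_pow A k (blinfun_apply A x - x))"
proof (induct n)
  case (Suc n)
  have "op_pow A (Suc n) x - x = op_pow A n (blinfun_apply A x - x) + (op_pow A n x - x)"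
    by (simp add: op_pow_Suc_right op_pow_diff)
  then show ?case using Suc by simp
qed simp
lemma op_pow_drift:
  fixes A :: "'a::real_normed_vector \<Rightarrow>\<^sub>L 'a"
  assumes "norm A \<le> 1" shows "norm (op_pow A k d - d) \<le> real k * norm (blinfun_apply A d - d)"
proof -
  have "norm (op_pow A k d - d) \<le> (\<Sum>i<k. norm (op_pow A i (blinfun_apply A d - d)))"
    unfolding op_pow_tele by (rule norm_sum)
  also have "\<dots> \<le> of_nat (card {..<k}) * norm (blinfun_apply A d - d)"
    by (rule sum_bounded_above) (rule op_pow_contr[OF assms])
  finally show ?thesis by simp
qed
lemma M_est:
  fixes A :: "'a::real_normed_vector \<Rightarrow>\<^sub>L 'a"
  assumes "norm A \<le> 1" "k \<le> n"
  shows "norm (op_pow A k \<psi> - \<psi>) \<le> 2 * norm (\<psi> - d) + real n * norm (blinfun_apply A d - d)"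
proof -
  have eq: "op_pow A k \<psi> - \<psi> = op_pow A k (\<psi> - d) + (op_pow A k d - d) + (d - \<psi>)"
    by (simp add: op_pow_diff)
  have "norm (op_pow A k \<psi> - \<psi>) \<le> norm (op_pow A k (\<psi> - d)) + norm (op_pow A k d - d) + norm (d - \<psi>)"
    unfolding eq by (meson norm_triangle_le order_refl add_mono)
  also have "\<dots> \<le> norm (\<psi> - d) + real k * norm (blinfun_apply A d - d) + norm (\<psi> - d)"
    by (intro add_mono op_pow_contr[OF assms(1)] op_pow_drift[OF assms(1)]) (simp add: norm_minus_commute)
  also have "real k * norm (blinfun_apply A d - d) \<le> real n * norm (blinfun_apply A d - d)"
    using assms(2) by (intro mult_right_mono) auto
  finally show ?thesis by simp
qed

lemma key_est:
  fixes A :: "'a::real_normed_vector \<Rightarrow>\<^sub>L 'a"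
  assumes "norm A \<le> 1" "h > 0" "s = real n * h"
    and M: "\<forall>k<n. norm (op_pow A k \<psi> - \<psi>) \<le> M"
  shows "norm (op_pow A n \<phi> - \<phi> - s *\<^sub>R \<psi>) \<le> s * (M + norm ((1/h) *\<^sub>R (blinfun_apply A \<phi> - \<phi>) - \<psi>))"
proof -
  define r where "r = (1/h) *\<^sub>R (blinfun_apply A \<phi> - \<phi>) - \<psi>"
  have a: "blinfun_apply A \<phi> - \<phi> = h *\<^sub>R (\<psi> + r)"
    using assms(2) by (simp add: r_def)
  have "op_pow A n \<phi> - \<phi> = (\<Sum>k<n. h *\<^sub>R (op_pow A k \<psi> + op_pow A k r))"
    unfolding op_pow_tele a by (simp add: op_pow_scaleR op_pow_add)
  also have "\<dots> = (\<Sum>k<n. h *\<^sub>R ((op_pow A k \<psi> - \<psi>) + op_pow A k r)) + (\<Sum>k<n. h *\<^sub>R \<psi>)"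
    by (simp add: sum.distrib[symmetric] algebra_simps)
  also have "(\<Sum>k<n. h *\<^sub>R \<psi>) = s *\<^sub>R \<psi>" using assms(3) by (simp add: scaleR_sum_left[symmetric])
  finally have eq: "op_pow A n \<phi> - \<phi> - s *\<^sub>R \<psi> = (\<Sum>k<n. h *\<^sub>R ((op_pow A k \<psi> - \<psi>) + op_pow A k r))"
    by simp
  have "norm (op_pow A n \<phi> - \<phi> - s *\<^sub>R \<psi>) \<le> (\<Sum>k<n. norm (h *\<^sub>R ((op_pow A k \<psi> - \<psi>) + op_pow A k r)))"
    unfolding eq by (rule norm_sum)
  also have "\<dots> \<le> of_nat (card {..<n}) * (h * (M + norm r))"
  proof (rule sum_bounded_above)
    fix k assume "k \<in> {..<n}"
    hence "norm ((op_pow A k \<psi> - \<psi>) + op_pow A k r) \<le> M + norm r"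
      using M op_pow_contr[OF assms(1), of k r] by (meson lessThan_iff norm_triangle_le add_mono)
    thus "norm (h *\<^sub>R ((op_pow A k \<psi> - \<psi>) + op_pow A k r)) \<le> h * (M + norm r)"
      using assms(2) by (simp add: mult_left_mono)
  qed
  also have "\<dots> = s * (M + norm r)" using assms(3) by simp
  finally show ?thesis by (simp add: r_def)
qed

lemma gen_domain_T:
  fixes T :: "real \<Rightarrow> 'a::banach \<Rightarrow>\<^sub>L 'a"
  assumes "sc_contraction_semigroup T" "x \<in> gen_domain T" "h \<ge> 0"
  shows "T h x \<in> gen_domain T"
proof -
  obtain y where y: "((\<lambda>t. (1 / t) *\<^sub>R (T t x - x)) \<longlongrightarrow> y) (at_right 0)"
    using assms(2) by (auto simp: gen_domain_def)
  have "((\<lambda>t. T h ((1 / t) *\<^sub>R (T t x - x))) \<longlongrightarrow> T h y) (at_right 0)"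
    by (intro blinfun.tendsto y tendsto_const)
  moreover have "\<forall>\<^sub>F t in at_right 0. T h ((1 / t) *\<^sub>R (T t x - x)) = (1 / t) *\<^sub>R (T t (T h x) - T h x)"
  proof (rule eventually_mono[OF eventually_at_right_less])
    fix t :: real assume "0 < t"
    have "T t (T h x) = T (t + h) x" using assms(1) \<open>0<t\<close> assms(3)
      unfolding sc_contraction_semigroup_def by simp
    also have "\<dots> = T h (T t x)" using assms(1) \<open>0<t\<close> assms(3)
      unfolding sc_contraction_semigroup_def by (simp add: add.commute)
    finally show "T h ((1 / t) *\<^sub>R (T t x - x)) = (1 / t) *\<^sub>R (T t (T h x) - T h x)"
      by (simp add: blinfun.scaleR_right blinfun.diff_right)
  qed
  ultimately have "((\<lambda>t. (1 / t) *\<^sub>R (T t (T h x) - T h x)) \<longlongrightarrow> T h y) (at_right 0)"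
    using Lim_transform_eventually by fastforce
  thus ?thesis by (auto simp: gen_domain_def)
qed

lemma gen_domain_diff:
  assumes "x \<in> gen_domain T" "z \<in> gen_domain T"
  shows "c *\<^sub>R (x - z) \<in> gen_domain T"
proof -
  obtain y where y: "((\<lambda>t. (1 / t) *\<^sub>R (T t x - x)) \<longlongrightarrow> y) (at_right 0)"
    using assms(1) by (auto simp: gen_domain_def)
  obtain w where w: "((\<lambda>t. (1 / t) *\<^sub>R (T t z - z)) \<longlongrightarrow> w) (at_right 0)"
    using assms(2) by (auto simp: gen_domain_def)
  have "((\<lambda>t. c *\<^sub>R ((1 / t) *\<^sub>R (T t x - x) - (1 / t) *\<^sub>R (T t z - z))) \<longlongrightarrow> c *\<^sub>R (y - w)) (at_right 0)"
    by (intro tendsto_scaleR tendsto_diff y w tendsto_const)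
  moreover have "\<And>t. c *\<^sub>R ((1 / t) *\<^sub>R (T t x - x) - (1 / t) *\<^sub>R (T t z - z)) =
     (1 / t) *\<^sub>R (T t (c *\<^sub>R (x - z)) - c *\<^sub>R (x - z))"
    by (simp add: blinfun.scaleR_right blinfun.diff_right algebra_simps)
  ultimately show ?thesis unfolding gen_domain_def by auto
qed

theorem lemma4:
  fixes T F :: "real \<Rightarrow> 'a::banach \<Rightarrow>\<^sub>L 'a"
    and L :: "'a \<Rightarrow> 'a" and Dom D :: "'a set"
    and m :: "real \<Rightarrow> nat" and \<phi> :: 'a
  assumes "sc_contraction_semigroup T"
    and "is_generator T L Dom"
    and "sc_contraction_family F"
    and "is_core L Dom D"
    and "chernoff_equivalent_on F L D"
    and "\<forall>s t. 0 < s \<and> s \<le> t \<longrightarrow> m t \<le> m s"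
    and "filterlim m at_top (at_right 0)"
    and "\<phi> \<in> D"
    and "\<epsilon> > 0"
  shows "\<exists>t\<^sub>\<epsilon>>0. \<exists>s\<^sub>\<epsilon>>0. \<forall>t\<in>{0<..t\<^sub>\<epsilon>}. \<forall>s\<in>{0<..s\<^sub>\<epsilon>}.
           norm (op_pow (F (s / real (m t))) (m t) \<phi> - T s \<phi>) / s < \<epsilon>"
proof -
  define \<psi> where "\<psi> = L \<phi>"
  have DomT: "Dom = gen_domain T" and genlim: "\<And>x. x \<in> Dom \<Longrightarrow> ((\<lambda>t. (1 / t) *\<^sub>R (T t x - x)) \<longlongrightarrow> L x) (at_right 0)"
    using assms(2) unfolding is_generator_def by auto
  have DD: "D \<subseteq> Dom" using assms(4) unfolding is_core_def by auto
  have phiDom: "\<phi> \<in> Dom" using DD assms(8) by auto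
  have ch: "\<And>x. x \<in> D \<Longrightarrow> ((\<lambda>t. norm ((1 / t) *\<^sub>R (F t x - x) - L x)) \<longlongrightarrow> 0) (at_right 0)"
    using assms(5) unfolding chernoff_equivalent_on_def by auto
  have Fc: "\<And>t. t \<ge> 0 \<Longrightarrow> norm (F t) \<le> 1" using assms(3) unfolding sc_contraction_family_def by auto
  define e where "e = \<epsilon> / 16"
  have e: "e > 0" using assms(9) by (simp add: e_def)
  obtain d where dD: "d \<in> D" and dpsi: "norm (\<psi> - d) < 2 * e"
  proof -
    have lim: "((\<lambda>t. (1 / t) *\<^sub>R (T t \<phi> - \<phi>)) \<longlongrightarrow> \<psi>) (at_right 0)"
      using genlim[OF phiDom] by (simp add: \<psi>_def)
    have "\<forall>\<^sub>F t in at_right 0. dist ((1 / t) *\<^sub>R (T t \<phi> - \<phi>)) \<psi> < e \<and> 0 < t"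
      using lim e by (intro eventually_conj eventually_at_right_less) (auto simp: tendsto_iff)
    then obtain h where h: "dist ((1 / h) *\<^sub>R (T h \<phi> - \<phi>)) \<psi> < e" "0 < h"
      using eventually_happens' trivial_limit_at_right_real by blast
    have "T h \<phi> \<in> gen_domain T" using gen_domain_T[OF assms(1)] phiDom DomT h by auto
    hence "(1 / h) *\<^sub>R (T h \<phi> - \<phi>) \<in> Dom" using gen_domain_diff phiDom DomT by auto
    then obtain d where "d \<in> D" "norm (d - (1 / h) *\<^sub>R (T h \<phi> - \<phi>)) + norm (L d - L ((1 / h) *\<^sub>R (T h \<phi> - \<phi>))) < e"
      using assms(4) e unfolding is_core_def by blast
    hence "norm (d - (1 / h) *\<^sub>R (T h \<phi> - \<phi>)) < e" by (smt (verit) norm_ge_zero)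
    moreover have "norm (\<psi> - d) \<le> norm (\<psi> - (1 / h) *\<^sub>R (T h \<phi> - \<phi>)) + norm ((1 / h) *\<^sub>R (T h \<phi> - \<phi>) - d)"
      using norm_triangle_ineq[of "\<psi> - (1 / h) *\<^sub>R (T h \<phi> - \<phi>)" "(1 / h) *\<^sub>R (T h \<phi> - \<phi>) - d"] by simp
    moreover have "norm (\<psi> - (1 / h) *\<^sub>R (T h \<phi> - \<phi>)) < e" using h(1) by (simp add: dist_norm norm_minus_commute)
    ultimately have "norm (\<psi> - d) < 2 * e" by (simp add: norm_minus_commute)
    thus ?thesis using \<open>d \<in> D\<close> that by blast
  qed
  define C where "C = norm (L d) + 1"
  have C: "C > 0" unfolding C_def by (smt (verit) norm_ge_zero)
  have ev: "\<forall>\<^sub>F t in at_right 0. norm ((1 / t) *\<^sub>R (F t \<phi> - \<phi>) - \<psi>) < 4 * e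
      \<and> norm ((1 / t) *\<^sub>R (F t d - d) - L d) < 1
      \<and> norm ((1 / t) *\<^sub>R (T t \<phi> - \<phi>) - \<psi>) < 4 * e
      \<and> t * C < 4 * e"
  proof (intro eventually_conj)
    show "\<forall>\<^sub>F t in at_right 0. norm ((1 / t) *\<^sub>R (F t \<phi> - \<phi>) - \<psi>) < 4 * e"
      using order_tendstoD(2)[OF ch[OF assms(8)], of "4*e"] e by (simp add: \<psi>_def)
    show "\<forall>\<^sub>F t in at_right 0. norm ((1 / t) *\<^sub>R (F t d - d) - L d) < 1"
      using order_tendstoD(2)[OF ch[OF dD], of 1] by simp
    show "\<forall>\<^sub>F t in at_right 0. norm ((1 / t) *\<^sub>R (T t \<phi> - \<phi>) - \<psi>) < 4 * e"
      using genlim[OF phiDom] e unfolding tendsto_iff dist_norm \<psi>_def by auto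
    have "((\<lambda>t. t * C) \<longlongrightarrow> 0 * C) (at_right 0)"
      by (intro tendsto_mult tendsto_const) (simp add: tendsto_ident_at)
    thus "\<forall>\<^sub>F t in at_right 0. t * C < 4 * e"
      using order_tendstoD(2) e by fastforce
  qed
  then obtain b where b: "b > 0" and bP: "\<And>t. 0 < t \<Longrightarrow> t < b \<Longrightarrow>
      norm ((1 / t) *\<^sub>R (F t \<phi> - \<phi>) - \<psi>) < 4 * e
      \<and> norm ((1 / t) *\<^sub>R (F t d - d) - L d) < 1
      \<and> norm ((1 / t) *\<^sub>R (T t \<phi> - \<phi>) - \<psi>) < 4 * e
      \<and> t * C < 4 * e"
    unfolding eventually_at_right[OF zero_less_one] by auto
  have "\<forall>\<^sub>F t in at_right 0. 1 \<le> m t" using assms(7) unfolding filterlim_at_top by blast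
  then obtain b' where b': "b' > 0" and b'P: "\<And>t. 0 < t \<Longrightarrow> t < b' \<Longrightarrow> 1 \<le> m t"
    unfolding eventually_at_right[OF zero_less_one] by auto
  show ?thesis
  proof (rule exI[of _ "b'/2"], intro conjI, simp add: b', rule exI[of _ "b/2"], intro conjI, simp add: b, intro ballI)
    fix t s assume t: "t \<in> {0<..b'/2}" and s: "s \<in> {0<..b/2}"
    define n where "n = m t"
    have n: "1 \<le> n" using b'P t b' unfolding n_def by auto
    define h where "h = s / real n"
    have h: "0 < h" "h \<le> s" using n s by (auto simp: h_def field_simps)
    have sn: "s = real n * h" using n by (simp add: h_def)
    define A where "A = F h"
    have A: "norm A \<le> 1" using Fc h by (simp add: A_def)
    have Ph: "norm ((1 / h) *\<^sub>R (A \<phi> - \<phi>) - \<psi>) < 4 * e" "norm ((1 / h) *\<^sub>R (A d - d) - L d) < 1"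
      using bP[of h] h s b unfolding A_def by auto
    have Ps: "norm ((1 / s) *\<^sub>R (T s \<phi> - \<phi>) - \<psi>) < 4 * e" "s * C < 4 * e"
      using bP[of s] s b by auto
    have "real n * norm (A d - d) = s * norm ((1 / h) *\<^sub>R (A d - d))"
      using h sn by simp
    also have "\<dots> \<le> s * C"
    proof -
      have "norm ((1 / h) *\<^sub>R (A d - d)) \<le> norm (L d) + norm ((1 / h) *\<^sub>R (A d - d) - L d)"
        by (metis add.commute diff_add_cancel norm_triangle_ineq)
      thus ?thesis using Ph(2) s unfolding C_def by (intro mult_left_mono) auto
    qed
    finally have nd: "real n * norm (A d - d) \<le> s * C" .
    define M where "M = 2 * (2 * e) + s * C"
    have Mb: "\<forall>k<n. norm (op_pow A k \<psi> - \<psi>) \<le> M"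
    proof (intro allI impI)
      fix k assume "k < n"
      thus "norm (op_pow A k \<psi> - \<psi>) \<le> M" using M_est[OF A, of k n \<psi> d] dpsi nd unfolding M_def by auto
    qed
    have X1: "norm (op_pow A n \<phi> - \<phi> - s *\<^sub>R \<psi>) \<le> s * (M + 4 * e)"
    proof -
      have "norm (op_pow A n \<phi> - \<phi> - s *\<^sub>R \<psi>) \<le> s * (M + norm ((1/h) *\<^sub>R (A \<phi> - \<phi>) - \<psi>))"
        by (rule key_est[OF A h(1) sn Mb])
      also have "\<dots> \<le> s * (M + 4 * e)" using Ph(1) s by (intro mult_left_mono) auto
      finally show ?thesis .
    qed
    have X2: "norm (T s \<phi> - \<phi> - s *\<^sub>R \<psi>) \<le> s * (4 * e)"
    proof -
      have "T s \<phi> - \<phi> - s *\<^sub>R \<psi> = s *\<^sub>R ((1 / s) *\<^sub>R (T s \<phi> - \<phi>) - \<psi>)"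
        using s by (simp add: scaleR_diff_right)
      hence "norm (T s \<phi> - \<phi> - s *\<^sub>R \<psi>) = s * norm ((1 / s) *\<^sub>R (T s \<phi> - \<phi>) - \<psi>)"
        using s by simp
      thus ?thesis using Ps(1) s by (simp add: mult_left_mono)
    qed
    have "norm (op_pow A n \<phi> - T s \<phi>) \<le> norm (op_pow A n \<phi> - \<phi> - s *\<^sub>R \<psi>) + norm (T s \<phi> - \<phi> - s *\<^sub>R \<psi>)"
      by (metis (no_types, lifting) diff_diff_eq2 diff_add_cancel norm_triangle_ineq4 add_diff_cancel_right)
    also have "\<dots> \<le> s * (M + 4 * e) + s * (4 * e)" using X1 X2 by simp
    also have "\<dots> < s * \<epsilon>"
    proof -
      have "M + 4 * e + 4 * e < \<epsilon>" using Ps(2) unfolding M_def e_def by simp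
      thus ?thesis using s by (simp add: distrib_left[symmetric])
    qed
    finally have "norm (op_pow A n \<phi> - T s \<phi>) < s * \<epsilon>" .
    thus "norm (op_pow (F (s / real (m t))) (m t) \<phi> - T s \<phi>) / s < \<epsilon>"
      using s by (simp add: A_def h_def n_def divide_less_eq mult.commute)
  qed
qed

end
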